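(* Let $\iota:\Lambda\hookrightarrow\widetilde{\Lambda}$ be a primitive isometric embedding of the $K3^{[n]}$-lattice into the Mukai lattice, $v$ a generator of $\iota(\Lambda)^\perp$, $\alpha\in\Lambda$ primitive isotropic, $\beta:=\iota(\alpha)$, and $\gamma\in\widetilde{\Lambda}$ with $(\gamma,\beta)=-1$ and $(\gamma,\gamma)=0$. Let $\Lambda_{k3}:=\beta^\perp/\mathbb{Z}\beta$ and let $h$ send an isometry of $\widetilde{\Lambda}$ fixing $\beta$ and $v$ to the induced isometry of $\Lambda_{k3}$. For $z\in\widetilde{\Lambda}$ orthogonal to $\beta$ and $v$ define $\tilde g_z(x):=x-(x,\beta)z+\left[(x,z)-\tfrac12(x,\beta)(z,z)\right]\beta$. Then $\tilde g_z$ is the unique isometry of $\widetilde{\Lambda}$ fixing $\beta$ and $v$, lying in the kernel of $h$, and sending $\gamma$ to an element congruent to $\gamma+z$ modulo $\mathbb{Z}\beta$. Moreover $\tilde g_z$ is orientation preserving.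
   Context: The Mukai lattice $\widetilde{\Lambda}$ is $E_8(-1)^{\oplus2}\oplus U^{\oplus4}$ (even unimodular of signature $(4,20)$); the $K3^{[n]}$-lattice $\Lambda$ ($n\ge2$) is $U^{\oplus3}\oplus E_8(-1)^{\oplus2}\oplus\langle2-2n\rangle$. An isometry is orientation preserving if it preserves the orientation of the positive cone $\{x\in\widetilde{\Lambda}\otimes\mathbb{R}:(x,x)>0\}$, i.e. acts trivially on its $H^2\cong\mathbb{Z}$. *)

theory Defs
  imports "HOL-Analysis.Analysis" "HOL-Library.Function_Algebras"
begin

text \<open>Elements of a rank d lattice are functions nat => int supported on {..<d}.\<close>
definition vecs :: "nat \<Rightarrow> (nat \<Rightarrow> int) set" where
  "vecs d = {x. \<forall>i\<ge>d. x i = 0}"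

definition bil :: "nat \<Rightarrow> (nat \<Rightarrow> nat \<Rightarrow> int) \<Rightarrow> (nat \<Rightarrow> int) \<Rightarrow> (nat \<Rightarrow> int) \<Rightarrow> int" where
  "bil d G x y = (\<Sum>i<d. \<Sum>j<d. x i * G i j * y j)"

text \<open>Cartan matrix of E8 (positive definite): chain 0-1-2-3-4-5-6, node 7 attached to node 2.\<close>
definition e8_adj :: "nat \<Rightarrow> nat \<Rightarrow> bool" where
  "e8_adj i j = ((i < 7 \<and> j < 7 \<and> (i = j + 1 \<or> j = i + 1)) \<or> (i = 2 \<and> j = 7) \<or> (i = 7 \<and> j = 2))"

definition e8 :: "nat \<Rightarrow> nat \<Rightarrow> int" where
  "e8 i j = (if i < 8 \<and> j < 8 then (if i = j then 2 else if e8_adj i j then -1 else 0) else 0)"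

definition hypU :: "nat \<Rightarrow> nat \<Rightarrow> int" where
  "hypU i j = (if (i = 0 \<and> j = 1) \<or> (i = 1 \<and> j = 0) then 1 else 0)"

text \<open>Mukai lattice E8(-1)^2 + U^4, rank 24: indices 0..7, 8..15 for E8(-1), 16..23 for U^4.\<close>
definition mukai_gram :: "nat \<Rightarrow> nat \<Rightarrow> int" where
  "mukai_gram i j =
     (if i < 8 \<and> j < 8 then - e8 i j
      else if 8 \<le> i \<and> i < 16 \<and> 8 \<le> j \<and> j < 16 then - e8 (i - 8) (j - 8)
      else if 16 \<le> i \<and> i < 24 \<and> 16 \<le> j \<and> j < 24 \<and> (i - 16) div 2 = (j - 16) div 2
        then hypU ((i - 16) mod 2) ((j - 16) mod 2)
      else 0)"

text \<open>K3^[n] lattice U^3 + E8(-1)^2 + <2-2n>, rank 23: indices 0..5 for U^3,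
  6..13 and 14..21 for E8(-1), 22 for <2-2n>.\<close>
definition k3n_gram :: "nat \<Rightarrow> nat \<Rightarrow> nat \<Rightarrow> int" where
  "k3n_gram n i j =
     (if i < 6 \<and> j < 6 \<and> i div 2 = j div 2 then hypU (i mod 2) (j mod 2)
      else if 6 \<le> i \<and> i < 14 \<and> 6 \<le> j \<and> j < 14 then - e8 (i - 6) (j - 6)
      else if 14 \<le> i \<and> i < 22 \<and> 14 \<le> j \<and> j < 22 then - e8 (i - 14) (j - 14)
      else if i = 22 \<and> j = 22 then 2 - 2 * int n
      else 0)"

abbreviation mukai :: "(nat \<Rightarrow> int) \<Rightarrow> (nat \<Rightarrow> int) \<Rightarrow> int" where
  "mukai \<equiv> bil 24 mukai_gram"

abbreviation k3n :: "nat \<Rightarrow> (nat \<Rightarrow> int) \<Rightarrow> (nat \<Rightarrow> int) \<Rightarrow> int" where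
  "k3n n \<equiv> bil 23 (k3n_gram n)"

definition zscale :: "int \<Rightarrow> (nat \<Rightarrow> int) \<Rightarrow> (nat \<Rightarrow> int)" where
  "zscale m y = (\<lambda>i. m * y i)"

definition primitive_elem :: "nat \<Rightarrow> (nat \<Rightarrow> int) \<Rightarrow> bool" where
  "primitive_elem d a \<longleftrightarrow> a \<in> vecs d \<and> a \<noteq> 0 \<and>
     (\<forall>m y. y \<in> vecs d \<and> a = zscale m y \<longrightarrow> \<bar>m\<bar> = 1)"

definition isometric_embedding ::
  "nat \<Rightarrow> (nat \<Rightarrow> nat \<Rightarrow> int) \<Rightarrow> nat \<Rightarrow> (nat \<Rightarrow> nat \<Rightarrow> int) \<Rightarrow> ((nat \<Rightarrow> int) \<Rightarrow> (nat \<Rightarrow> int)) \<Rightarrow> bool" where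
  "isometric_embedding d G e H f \<longleftrightarrow>
     (\<forall>x\<in>vecs d. f x \<in> vecs e) \<and>
     (\<forall>x\<in>vecs d. \<forall>y\<in>vecs d. f (x + y) = f x + f y) \<and>
     (\<forall>m. \<forall>x\<in>vecs d. f (zscale m x) = zscale m (f x)) \<and>
     (\<forall>x\<in>vecs d. \<forall>y\<in>vecs d. bil e H (f x) (f y) = bil d G x y)"

definition primitive_embedding ::
  "nat \<Rightarrow> (nat \<Rightarrow> nat \<Rightarrow> int) \<Rightarrow> nat \<Rightarrow> (nat \<Rightarrow> nat \<Rightarrow> int) \<Rightarrow> ((nat \<Rightarrow> int) \<Rightarrow> (nat \<Rightarrow> int)) \<Rightarrow> bool" where
  "primitive_embedding d G e H f \<longleftrightarrow> isometric_embedding d G e H f \<and>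
     (\<forall>m y. m \<noteq> 0 \<and> y \<in> vecs e \<and> zscale m y \<in> f ` vecs d \<longrightarrow> y \<in> f ` vecs d)"

definition mukai_isometry :: "((nat \<Rightarrow> int) \<Rightarrow> (nat \<Rightarrow> int)) \<Rightarrow> bool" where
  "mukai_isometry g \<longleftrightarrow> bij_betw g (vecs 24) (vecs 24) \<and>
     (\<forall>x\<in>vecs 24. \<forall>y\<in>vecs 24. g (x + y) = g x + g y) \<and>
     (\<forall>x\<in>vecs 24. \<forall>y\<in>vecs 24. mukai (g x) (g y) = mukai x y)"

text \<open>g lies in the kernel of h: the induced map on beta^perp / Z beta is the identity.\<close>
definition trivial_on_k3 :: "(nat \<Rightarrow> int) \<Rightarrow> ((nat \<Rightarrow> int) \<Rightarrow> (nat \<Rightarrow> int)) \<Rightarrow> bool" where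
  "trivial_on_k3 \<beta> g \<longleftrightarrow> (\<forall>x\<in>vecs 24. mukai x \<beta> = 0 \<longrightarrow> (\<exists>k. g x - x = zscale k \<beta>))"

text \<open>The map tilde g_z. The Mukai lattice is even, so (z,z) div 2 is exact.\<close>
definition gtilde :: "(nat \<Rightarrow> int) \<Rightarrow> (nat \<Rightarrow> int) \<Rightarrow> (nat \<Rightarrow> int) \<Rightarrow> (nat \<Rightarrow> int)" where
  "gtilde \<beta> z x = x - zscale (mukai x \<beta>) z + zscale (mukai x z - mukai x \<beta> * (mukai z z div 2)) \<beta>"

definition mukaiR :: "(nat \<Rightarrow> real) \<Rightarrow> (nat \<Rightarrow> real) \<Rightarrow> real" where
  "mukaiR x y = (\<Sum>i<24. \<Sum>j<24. x i * real_of_int (mukai_gram i j) * y j)"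

definition vecsR :: "nat \<Rightarrow> (nat \<Rightarrow> real) set" where
  "vecsR d = {x. \<forall>i\<ge>d. x i = 0}"

definition unitv :: "nat \<Rightarrow> nat \<Rightarrow> int" where
  "unitv i = (\<lambda>j. if j = i then 1 else 0)"

definition realext :: "((nat \<Rightarrow> int) \<Rightarrow> (nat \<Rightarrow> int)) \<Rightarrow> (nat \<Rightarrow> real) \<Rightarrow> (nat \<Rightarrow> real)" where
  "realext g x = (\<lambda>j. \<Sum>i<24. x i * real_of_int (g (unitv i) j))"

text \<open>Orientation preserving: g preserves the orientation of positive definite 4-spaces in
  the Mukai lattice tensor R, i.e. for every frame p of a positive 4-space P the map
  P -> P, x |-> proj_P (g x) has positive determinant; equivalently det((g p_a, p_b)) > 0.\<close>
definition orientation_preserving :: "((nat \<Rightarrow> int) \<Rightarrow> (nat \<Rightarrow> int)) \<Rightarrow> bool" where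
  "orientation_preserving g \<longleftrightarrow>
     (\<forall>p :: 4 \<Rightarrow> (nat \<Rightarrow> real).
        (\<forall>a. p a \<in> vecsR 24) \<and>
        (\<forall>c :: real ^ 4. c \<noteq> 0 \<longrightarrow> (\<Sum>a\<in>UNIV. \<Sum>b\<in>UNIV. c $ a * c $ b * mukaiR (p a) (p b)) > 0)
        \<longrightarrow> det (\<chi> a b. mukaiR (realext g (p a)) (p b)) > 0)"

end

theory Submission
  imports Defs
begin


definition gb :: "(nat \<Rightarrow> nat \<Rightarrow> 'a::comm_ring_1) \<Rightarrow> (nat\<Rightarrow>'a) \<Rightarrow> (nat\<Rightarrow>'a) \<Rightarrow> 'a" where
 "gb G x y = (\<Sum>i<24. \<Sum>j<24. x i * G i j * y j)"

abbreviation MG :: "(nat\<Rightarrow>'a::comm_ring_1) \<Rightarrow> (nat\<Rightarrow>'a) \<Rightarrow> 'a" where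
  "MG \<equiv> gb (\<lambda>i j. of_int (mukai_gram i j))"

lemma sum24: "(\<Sum>i<(24::nat). f i) = f 0 + f 1 + f 2 + f 3 + f 4 + f 5 + f 6 + f 7 + f 8 + f 9 + f 10 + f 11 + f 12 + f 13 + f 14 + f 15 + f 16 + f 17 + f 18 + f 19 + f 20 + f 21 + f 22 + (f 23 :: 'a::comm_monoid_add)"
  by (simp add: eval_nat_numeral sum.lessThan_Suc add.assoc)

lemma MG_expand: "MG x y = - 2 * x (0) * y (0) - 2 * x (1) * y (1) - 2 * x (2) * y (2) - 2 * x (3) * y (3) - 2 * x (4) * y (4) - 2 * x (5) * y (5) - 2 * x (6) * y (6) - 2 * x (7) * y (7) + x (0) * y (1) + x (1) * y (0) + x (1) * y (2) + x (2) * y (1) + x (2) * y (3) + x (3) * y (2) + x (3) * y (4) + x (4) * y (3) + x (4) * y (5) + x (5) * y (4) + x (5) * y (6) + x (6) * y (5) + x (2) * y (7) + x (7) * y (2) - 2 * x (8) * y (8) - 2 * x (9) * y (9) - 2 * x (10) * y (10) - 2 * x (11) * y (11) - 2 * x (12) * y (12) - 2 * x (13) * y (13) - 2 * x (14) * y (14) - 2 * x (15) * y (15) + x (8) * y (9) + x (9) * y (8) + x (9) * y (10) + x (10) * y (9) + x (10) * y (11) + x (11) * y (10) + x (11) * y (12) + x (12) * y (11) + x (12) * y (13) + x (13) * y (12) + x (13) * y (14) + x (14) * y (13) + x (10) * y (15) + x (15) * y (10) + x (16) * y (17) + x (17) * y (16) + x (18) * y (19) + x (19) * y (18) + x (20)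 * y (21) + x (21) * y (20) + x (22) * y (23) + (x (23) * y (22) :: 'a::comm_ring_1)"
  unfolding gb_def sum24 by (simp add: mukai_gram_def e8_def e8_adj_def hypU_def algebra_simps)

lemma MG_sym: "MG x y = MG y x"
  unfolding MG_expand by (simp add: algebra_simps)

lemma MG_add_left: "MG (\<lambda>i. x i + y i) w = MG x w + MG y w"
  unfolding MG_expand by (simp add: algebra_simps)
lemma MG_diff_left: "MG (\<lambda>i. x i - y i) w = MG x w - MG y w"
  unfolding MG_expand by (simp add: algebra_simps)
lemma MG_scale_left: "MG (\<lambda>i. c * x i) w = c * MG x w"
  unfolding MG_expand by (simp add: algebra_simps)
lemma MG_add_right: "MG w (\<lambda>i. x i + y i) = MG w x + MG w y"
  unfolding MG_expand by (simp add: algebra_simps)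
lemma MG_diff_right: "MG w (\<lambda>i. x i - y i) = MG w x - MG w y"
  unfolding MG_expand by (simp add: algebra_simps)
lemma MG_scale_right: "MG w (\<lambda>i. c * x i) = c * MG w x"
  unfolding MG_expand by (simp add: algebra_simps)
lemmas MG_lin = MG_add_left MG_diff_left MG_scale_left MG_add_right MG_diff_right MG_scale_right

lemma MG_even: "MG x x = 2 * (- x (0) * x (0) - x (1) * x (1) - x (2) * x (2) - x (3) * x (3) - x (4) * x (4) - x (5) * x (5) - x (6) * x (6) - x (7) * x (7) + x (0) * x (1) + x (1) * x (2) + x (2) * x (3) + x (3) * x (4) + x (4) * x (5) + x (5) * x (6) + x (2) * x (7) - x (8) * x (8) - x (9) * x (9) - x (10) * x (10) - x (11) * x (11) - x (12) * x (12) - x (13) * x (13) - x (14) * x (14) - x (15) * x (15) + x (8) * x (9) + x (9) * x (10) + x (10) * x (11) + x (11) * x (12) + x (12) * x (13) + x (13) * x (14) + x (10) * x (15) + x (16) * x (17) + x (18) * x (19) + x (20) * x (21) + x (22) * x (23))"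
  unfolding MG_expand by (simp add: algebra_simps)

lemma MG_of_int: "MG (\<lambda>i. of_int (x i)) (\<lambda>i. of_int (y i)) = (of_int (MG x y) :: 'a::comm_ring_1)"
  unfolding MG_expand by simp

lemma gb_sum_left: "finite A \<Longrightarrow> gb G (\<lambda>i. \<Sum>a\<in>A. f a i) y = (\<Sum>a\<in>A. gb G (f a) y)"
  unfolding gb_def by (simp add: sum_distrib_right sum.swap[of _ A])

lemma gb_cong: "(\<And>i. i < 24 \<Longrightarrow> x i = x' i) \<Longrightarrow> gb G x y = gb G x' y"
  unfolding gb_def by simp

lemma e8_nonneg: fixes ya yb yc yd ye yf yg yh :: real shows "(0::real) \<le> 2 * (ya*ya + yb*yb + yc*yc + yd*yd + ye*ye + yf*yf + yg*yg + yh*yh) - 2 * (ya*yb + yb*yc + yc*yd + yd*ye + ye*yf + yf*yg + yc*yh)"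
proof -
  have "2 * (ya*ya + yb*yb + yc*yc + yd*yd + ye*ye + yf*yf + yg*yg + yh*yh) - 2 * (ya*yb + yb*yc + yc*yd + yd*ye + ye*yf + yf*yg + yc*yh) = 2*(ya - yb/2)^2 + 3/2*(yb - 2/3*yc)^2 + 2*(yg - yf/2)^2 + 3/2*(yf - 2/3*ye)^2 + 4/3*(ye - 3/4*yd)^2 + 5/4*(yd - 4/5*yc)^2 + 2*(yh - yc/2)^2 + 1/30*yc^2" by (simp add: power2_eq_square algebra_simps)
  also have "\<dots> \<ge> 0" by (intro add_nonneg_nonneg mult_nonneg_nonneg) auto
  finally show ?thesis .
qed


lemma MG_nonpos: fixes u :: "nat\<Rightarrow>real"
  assumes "u 17 = - u 16" "u 19 = - u 18" "u 21 = - u 20" "u 23 = - u 22"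
  shows "MG u u \<le> 0"
proof -
  define QA where "QA = 2 * (u 0 * u 0 + u 1 * u 1 + u 2 * u 2 + u 3 * u 3 + u 4 * u 4 + u 5 * u 5 + u 6 * u 6 + u 7 * u 7) - 2 * (u 0 * u 1 + u 1 * u 2 + u 2 * u 3 + u 3 * u 4 + u 4 * u 5 + u 5 * u 6 + u 2 * u 7)"
  define QB where "QB = 2 * (u 8 * u 8 + u 9 * u 9 + u 10 * u 10 + u 11 * u 11 + u 12 * u 12 + u 13 * u 13 + u 14 * u 14 + u 15 * u 15) - 2 * (u 8 * u 9 + u 9 * u 10 + u 10 * u 11 + u 11 * u 12 + u 12 * u 13 + u 13 * u 14 + u 10 * u 15)"
  define S where "S = u 16 * u 16 + u 18 * u 18 + u 20 * u 20 + u 22 * u 22"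
  have A: "0 \<le> QA" unfolding QA_def
    using e8_nonneg[where ya="u 0" and yb="u 1" and yc="u 2" and yd="u 3" and ye="u 4" and yf="u 5" and yg="u 6" and yh="u 7"] .
  have B: "0 \<le> QB" unfolding QB_def
    using e8_nonneg[where ya="u 8" and yb="u 9" and yc="u 10" and yd="u 11" and ye="u 12" and yf="u 13" and yg="u 14" and yh="u 15"] .
  have E: "MG u u = - QA - QB - 2 * S"
    unfolding QA_def QB_def S_def by (simp add: MG_expand assms algebra_simps)
  have "0 \<le> S" unfolding S_def by simp
  thus ?thesis using A B E by linarith
qed

definition gt :: "(nat\<Rightarrow>'a::comm_ring_1) \<Rightarrow> (nat \<Rightarrow>'a) \<Rightarrow> 'a \<Rightarrow> (nat\<Rightarrow>'a) \<Rightarrow> (nat\<Rightarrow>'a)" where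
  "gt b z c x = (\<lambda>i. x i - MG x b * z i + (MG x z - MG x b * c) * b i)"

lemma gt_MG_left: "MG (gt b z c x) w = MG x w - MG x b * MG z w + (MG x z - MG x b * c) * MG b w"
  unfolding gt_def by (simp add: MG_lin)

lemma gt_MG_right: "MG w (gt b z c x) = MG w x - MG x b * MG w z + (MG x z - MG x b * c) * MG w b"
  unfolding gt_def by (simp add: MG_lin)

lemma gt_isom:
  assumes "MG b b = 0" "MG z b = 0" "MG z z = 2 * c"
  shows "MG (gt b z c x) (gt b z c y) = MG x y"
proof -
  have s1: "MG b z = 0" using assms(2) MG_sym by metis
  show ?thesis
    unfolding gt_MG_left gt_MG_right
    using assms s1 MG_sym[of b x] MG_sym[of b y] MG_sym[of z x] MG_sym[of z y] MG_sym[of x y]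
    by (simp add: algebra_simps)
qed

lemma gt_inv:
  assumes "MG b b = 0" "MG z b = 0" "MG z z = 2 * c"
  shows "gt b (\<lambda>i. - z i) c (gt b z c x) = x"
proof -
  have s1: "MG b z = 0" using assms(2) MG_sym by metis
  have n1: "MG (\<lambda>i. - z i) w = - MG z w" for w :: "nat \<Rightarrow> 'a"
    using MG_scale_left[of "-1" z w] by simp
  have n2: "MG w (\<lambda>i. - z i) = - MG w z" for w :: "nat \<Rightarrow> 'a"
    using MG_scale_right[of w "-1" z] by simp
  show ?thesis
    unfolding gt_def[of b "\<lambda>i. - z i"] gt_MG_left n2 n1
    using assms s1 by (simp add: gt_def fun_eq_iff algebra_simps)
qed

lemma gt_add: "gt b z c (\<lambda>i. x i + y i) = (\<lambda>i. gt b z c x i + gt b z c y i)"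
  unfolding gt_def by (simp add: MG_lin fun_eq_iff algebra_simps)


lemma dimlem: fixes f :: "'a::euclidean_space \<Rightarrow> 'b::euclidean_space" assumes "linear f" "DIM('b) < DIM('a)" shows "\<exists>x. x \<noteq> 0 \<and> f x = 0"
proof (rule ccontr)
  assume "\<not> ?thesis"
  hence "inj f" using linear_injective_0[OF assms(1)] by auto
  hence "dim (f ` UNIV) = dim (UNIV :: 'a set)" using dim_image_eq[OF assms(1)] by (metis inj_on_subset subset_UNIV)
  moreover have "dim (f ` UNIV) \<le> DIM('b)" by (rule dim_subset_UNIV)
  ultimately show False using assms(2) by simp
qed

lemma MG_sum_left: "MG (\<lambda>i. \<Sum>a\<in>(UNIV::'n::finite set). c a * p a i) y = (\<Sum>a\<in>UNIV. c a * MG (p a) y)"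
  by (subst gb_sum_left) (simp_all add: MG_scale_left)

lemma inertia:
  fixes p :: "4 \<Rightarrow> nat \<Rightarrow> real" and w :: "nat \<Rightarrow> real"
  assumes PD: "\<forall>c::real^4. c \<noteq> 0 \<longrightarrow> (\<Sum>a\<in>UNIV. \<Sum>b\<in>UNIV. c$a * c$b * MG (p a) (p b)) > 0"
  and orth: "\<And>b. MG w (p b) = 0"
  shows "MG w w \<le> 0"
proof (rule ccontr)
  assume "\<not> ?thesis" hence wpos: "MG w w > 0" by simp
  define U where "U = (\<lambda>(cd :: (real^4) \<times> real). (\<lambda>i. (\<Sum>a\<in>UNIV. fst cd $ a * p a i) + snd cd * w i))"
  define F where "F = (\<lambda>cd. (U cd 16 + U cd 17, U cd 18 + U cd 19, U cd 20 + U cd 21, U cd 22 + U cd 23))"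
  have lin: "linear F"
    unfolding F_def U_def by (intro linearI) (auto simp: algebra_simps sum.distrib sum_distrib_left)
  obtain cd where cd: "cd \<noteq> 0" "F cd = 0" using dimlem[OF lin] by auto
  obtain c d where cdd: "cd = (c,d)" by (cases cd)
  define A where "A = (\<lambda>i. \<Sum>a\<in>UNIV. c $ a * p a i)"
  define u where "u = (\<lambda>i. A i + d * w i)"
  have uU: "u = U cd" unfolding u_def A_def U_def cdd by simp
  have neg: "MG u u \<le> 0" apply (rule MG_nonpos) using cd(2) unfolding uU F_def by (auto simp: zero_prod_def)
  have pw: "MG (p a) w = 0" for a using orth MG_sym by metis
  have Ay: "MG A y = (\<Sum>a\<in>UNIV. c $ a * MG (p a) y)" for y unfolding A_def by (rule MG_sum_left)
  have Aw: "MG A w = 0" unfolding Ay pw by simp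
  have wA: "MG w A = 0" using Aw MG_sym by metis
  have AA: "MG A A = (\<Sum>a\<in>UNIV. \<Sum>b\<in>UNIV. c$a * c$b * MG (p a) (p b))"
  proof -
    have "MG A A = (\<Sum>a\<in>UNIV. c $ a * MG A (p a))" unfolding Ay[of A] by (simp add: MG_sym[of _ A])
    also have "\<dots> = (\<Sum>a\<in>UNIV. \<Sum>b\<in>UNIV. c$a * c$b * MG (p a) (p b))"
      unfolding Ay by (simp add: sum_distrib_left MG_sym[of "p _" "p _"] algebra_simps)
    finally show ?thesis .
  qed
  have uu: "MG u u = MG A A + d * d * MG w w"
    unfolding u_def by (simp add: MG_lin Aw wA)
  show False
  proof (cases "c = 0")
    case True
    hence "d \<noteq> 0" using cd(1) cdd by (auto simp: zero_prod_def)
    hence "d * d > 0" by (metis not_real_square_gt_zero)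
    hence "d * d * MG w w > 0" using wpos by (rule mult_pos_pos)
    moreover have "MG A A = 0" unfolding AA True by simp
    ultimately show False using neg uu by simp
  next
    case False
    hence "MG A A > 0" unfolding AA using PD by blast
    moreover have "d * d * MG w w \<ge> 0" using wpos by simp
    ultimately show False using neg uu by simp
  qed
qed

lemma det_path: fixes F :: "real \<Rightarrow> real^'n^'n"
  assumes "continuous_on {0..1} (\<lambda>t. det (F t))" "\<And>t. t\<in>{0..1} \<Longrightarrow> det (F t) \<noteq> 0" "det (F 0) > 0"
  shows "det (F 1) > 0"
proof (rule ccontr)
  assume "\<not> ?thesis" hence "det (F 1) \<le> 0" by simp
  then obtain x where "0 \<le> x" "x \<le> 1" "det (F x) = 0" using IVT2'[of "\<lambda>t. det (F t)" 1 0 0] assms by auto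
  thus False using assms(2) by auto
qed

lemma det_cont: assumes "\<And>i j. continuous_on S (\<lambda>t. F t $ i $ j)" shows "continuous_on S (\<lambda>t. det (F t :: real^'n^'n))"
  unfolding det_def by (intro continuous_intros assms)

lemma det_nz: fixes A :: "real^'n^'n"
  assumes "\<And>x. (\<forall>b. (\<Sum>a\<in>UNIV. A$a$b * x$a) = 0) \<Longrightarrow> x = 0" shows "det A \<noteq> 0"
proof -
  have "\<forall>x. transpose A *v x = 0 \<longrightarrow> x = 0" using assms by (auto simp: matrix_vector_mult_def transpose_def vec_eq_iff)
  then obtain B where "B ** transpose A = mat 1" using matrix_left_invertible_ker by blast
  hence "invertible (transpose A)" using matrix_left_right_inverse invertible_def by blast
  hence "det (transpose A) \<noteq> 0" using invertible_det_nz by blast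
  thus ?thesis by simp
qed




lemma mukai_MG: "mukai x y = MG x y" by (simp add: bil_def gb_def)
lemma mukaiR_MG: "mukaiR x y = MG x y" by (simp add: mukaiR_def gb_def)

lemma MG_zz: "MG z z = 2 * (MG z z div 2 :: int)"
  using MG_even[of z] by simp

lemma gtilde_gt: "gtilde b z = gt b z (mukai z z div 2)"
  by (simp add: gtilde_def gt_def zscale_def mukai_MG fun_eq_iff)

lemma MG_quad: fixes p :: "'n::finite \<Rightarrow> nat \<Rightarrow> real"
  shows "MG (\<lambda>i. \<Sum>a\<in>UNIV. x a * p a i) (\<lambda>i. \<Sum>a\<in>UNIV. x a * p a i) = (\<Sum>a\<in>UNIV. \<Sum>b\<in>UNIV. x a * x b * MG (p a) (p b))"
proof -
  let ?A = "\<lambda>i. \<Sum>a\<in>UNIV. x a * p a i"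
  have Ay: "MG ?A y = (\<Sum>a\<in>UNIV. x a * MG (p a) y)" for y by (rule MG_sum_left)
  have "MG ?A ?A = (\<Sum>a\<in>UNIV. x a * MG ?A (p a))" unfolding Ay[of ?A] by (simp add: MG_sym[of _ ?A])
  also have "\<dots> = (\<Sum>a\<in>UNIV. \<Sum>b\<in>UNIV. x a * x b * MG (p a) (p b))"
    unfolding Ay by (simp add: sum_distrib_left MG_sym[of "p _" "p _"] algebra_simps)
  finally show ?thesis .
qed

lemma add_zscale:
  assumes add: "\<forall>x\<in>vecs d. \<forall>y\<in>vecs d. g (x + y) = g x + g y" and y: "y \<in> vecs d"
  shows "g (zscale m y) = zscale m (g y)"
proof -
  have zv: "zscale k y \<in> vecs d" for k using y by (simp add: vecs_def zscale_def)
  have 0: "(0::nat\<Rightarrow>int) \<in> vecs d" by (simp add: vecs_def)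
  have g0: "g 0 = 0" using add 0 by (metis add.right_neutral add_left_imp_eq)
  have nat: "g (zscale (int n) y) = zscale (int n) (g y)" for n
  proof (induction n)
    case 0
    have a: "zscale (int 0) y = 0" and b: "zscale (int 0) (g y) = 0" by (simp_all add: zscale_def fun_eq_iff)
    show ?case by (simp only: a b g0)
  next
    case (Suc n)
    have "zscale (int (Suc n)) y = zscale (int n) y + y" by (simp add: zscale_def fun_eq_iff algebra_simps)
    hence "g (zscale (int (Suc n)) y) = g (zscale (int n) y) + g y" using add zv y by simp
    also have "\<dots> = zscale (int (Suc n)) (g y)" using Suc by (simp add: zscale_def fun_eq_iff algebra_simps)
    finally show ?case .
  qed
  show ?thesis
  proof (cases "m \<ge> 0")
    case True then show ?thesis using nat[of "nat m"] by simp
  next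
    case False
    define n where "n = nat (- m)"
    have m: "m = - int n" using False n_def by simp
    have "zscale m y + zscale (int n) y = 0" by (simp add: m zscale_def fun_eq_iff)
    hence "g (zscale m y) + g (zscale (int n) y) = 0" using add zv g0 by metis
    hence "g (zscale m y) = - zscale (int n) (g y)" using nat[of n] by (simp add: eq_neg_iff_add_eq_0)
    thus ?thesis by (simp add: m zscale_def fun_eq_iff)
  qed
qed

lemma unitv_row_int: assumes "i < 24" shows "MG (unitv i) y = (\<Sum>j<24. mukai_gram i j * y j)"
proof -
  have "MG (unitv i) y = (\<Sum>ia<24. if ia = i then (\<Sum>j<24. mukai_gram i j * y j) else 0)"
    unfolding gb_def by (rule sum.cong) (auto simp: unitv_def)
  also have "\<dots> = (\<Sum>j<24. mukai_gram i j * y j)" using assms by (simp add: sum.delta)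
  finally show ?thesis .
qed

lemma unitv_row: "i < 24 \<Longrightarrow> real_of_int (MG (unitv i) y) = (\<Sum>j<24. real_of_int (mukai_gram i j) * real_of_int (y j))"
  using unitv_row_int[of i y] by simp

lemma MG_via_unitv: "MG x (\<lambda>j. real_of_int (y j)) = (\<Sum>i<24. x i * real_of_int (MG (unitv i) y))"
proof -
  have "MG x (\<lambda>j. real_of_int (y j)) = (\<Sum>i<24. x i * (\<Sum>j<24. real_of_int (mukai_gram i j) * real_of_int (y j)))"
    unfolding gb_def by (simp add: sum_distrib_left algebra_simps)
  also have "\<dots> = (\<Sum>i<24. x i * real_of_int (MG (unitv i) y))"
    by (rule sum.cong[OF refl], subst unitv_row, auto)
  finally show ?thesis .
qed

lemma unitv_delta: "j < 24 \<Longrightarrow> (\<Sum>i<24. x i * real_of_int (unitv i j)) = x j"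
  unfolding unitv_def by (simp add: if_distrib cong: if_cong)


lemma realext_gt: assumes "j < 24"
  shows "realext (gt b z c) x j = gt (\<lambda>i. real_of_int (b i)) (\<lambda>i. real_of_int (z i)) (real_of_int c) x j"
proof -
  have "realext (gt b z c) x j = (\<Sum>i<24. x i * real_of_int (unitv i j)) - (\<Sum>i<24. x i * real_of_int (MG (unitv i) b)) * real_of_int (z j) + ((\<Sum>i<24. x i * real_of_int (MG (unitv i) z)) - (\<Sum>i<24. x i * real_of_int (MG (unitv i) b)) * real_of_int c) * real_of_int (b j)"
    unfolding realext_def gt_def by (simp add: sum_distrib_left sum_distrib_right sum_subtractf sum.distrib algebra_simps)
  also have "\<dots> = gt (\<lambda>i. real_of_int (b i)) (\<lambda>i. real_of_int (z i)) (real_of_int c) x j"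
    unfolding gt_def MG_via_unitv[symmetric] unitv_delta[OF assms] ..
  finally show ?thesis .
qed


declare of_int_eq_id [simp del]

theorem lemma5p2:
  fixes n :: nat
    and \<iota> :: "(nat \<Rightarrow> int) \<Rightarrow> (nat \<Rightarrow> int)"
    and v \<alpha> \<gamma> z :: "nat \<Rightarrow> int"
  assumes "n \<ge> 2"
    and "primitive_embedding 23 (k3n_gram n) 24 mukai_gram \<iota>"
    and "v \<in> vecs 24"
    and "{y \<in> vecs 24. \<forall>x\<in>\<iota> ` vecs 23. mukai y x = 0} = range (\<lambda>k. zscale k v)"
    and "primitive_elem 23 \<alpha>" and "k3n n \<alpha> \<alpha> = 0"
    and "\<gamma> \<in> vecs 24" and "mukai \<gamma> (\<iota> \<alpha>) = -1" and "mukai \<gamma> \<gamma> = 0"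
    and "z \<in> vecs 24" and "mukai z (\<iota> \<alpha>) = 0" and "mukai z v = 0"
  shows "mukai_isometry (gtilde (\<iota> \<alpha>) z)
       \<and> gtilde (\<iota> \<alpha>) z (\<iota> \<alpha>) = \<iota> \<alpha>
       \<and> gtilde (\<iota> \<alpha>) z v = v
       \<and> trivial_on_k3 (\<iota> \<alpha>) (gtilde (\<iota> \<alpha>) z)
       \<and> (\<exists>k. gtilde (\<iota> \<alpha>) z \<gamma> - (\<gamma> + z) = zscale k (\<iota> \<alpha>))
       \<and> (\<forall>g. mukai_isometry g \<and> g (\<iota> \<alpha>) = \<iota> \<alpha> \<and> g v = v \<and> trivial_on_k3 (\<iota> \<alpha>) g
              \<and> (\<exists>k. g \<gamma> - (\<gamma> + z) = zscale k (\<iota> \<alpha>))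
              \<longrightarrow> (\<forall>x\<in>vecs 24. g x = gtilde (\<iota> \<alpha>) z x))
       \<and> orientation_preserving (gtilde (\<iota> \<alpha>) z)"
proof -
  define b where "b = \<iota> \<alpha>"
  define c where "c = mukai z z div 2"
  have emb: "isometric_embedding 23 (k3n_gram n) 24 mukai_gram \<iota>" using assms(2) primitive_embedding_def by blast
  have avec: "\<alpha> \<in> vecs 23" using assms(5) primitive_elem_def by blast
  have bvec: "b \<in> vecs 24" using emb avec unfolding isometric_embedding_def b_def by blast
  have "mukai b b = k3n n \<alpha> \<alpha>" using emb avec unfolding isometric_embedding_def b_def by blast
  hence bb: "MG b b = (0::int)" using assms(6) unfolding mukai_MG by simp
  have "zscale 1 v = v" by (simp add: zscale_def)
  hence "v \<in> range (\<lambda>k. zscale k v)" by (metis rangeI)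
  hence vset: "v \<in> {y \<in> vecs 24. \<forall>x\<in>\<iota> ` vecs 23. mukai y x = 0}" using assms(4) by simp
  have "b \<in> \<iota> ` vecs 23" using avec b_def by simp
  hence "mukai v b = 0" using vset by blast
  hence vb: "MG v b = 0" unfolding mukai_MG .
  have zb: "MG z b = 0" using assms(11) unfolding b_def mukai_MG .
  have zv: "MG z v = 0" using assms(12) unfolding mukai_MG .
  have gb1: "MG \<gamma> b = -1" using assms(8) unfolding b_def mukai_MG .
  have gg: "MG \<gamma> \<gamma> = 0" using assms(9) unfolding mukai_MG .
  have zz: "MG z z = 2 * c" unfolding c_def mukai_MG by (rule MG_zz)
  have bz: "MG b z = 0" using zb MG_sym by metis
  have vz: "MG v z = 0" using zv MG_sym by metis
  have bg1: "MG b \<gamma> = -1" using gb1 MG_sym by metis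
  have G: "gtilde (\<iota> \<alpha>) z = gt b z c" unfolding b_def c_def gtilde_gt ..
  have gtvec: "\<And>x zz cc. x \<in> vecs 24 \<Longrightarrow> zz \<in> vecs 24 \<Longrightarrow> gt b zz cc x \<in> vecs 24"
    using bvec by (simp add: vecs_def gt_def)
  have nz: "(\<lambda>i. - z i) \<in> vecs 24" using assms(10) by (simp add: vecs_def)
  have iso: "mukai_isometry (gt b z c)"
    unfolding mukai_isometry_def
  proof (intro conjI ballI)
    show "bij_betw (gt b z c) (vecs 24) (vecs 24)"
    proof (rule bij_betw_byWitness[where f'="gt b (\<lambda>i. - z i) c"])
      show "\<forall>a\<in>vecs 24. gt b (\<lambda>i. - z i) c (gt b z c a) = a" using gt_inv[OF bb zb zz] by blast
      have zb': "MG (\<lambda>i. - z i) b = 0" using MG_scale_left[of "-1" z b] zb by simp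
      have zz': "MG (\<lambda>i. - z i) (\<lambda>i. - z i) = 2 * c"
        using MG_scale_left[of "-1" z] MG_scale_right[of _ "-1" z] zz by simp
      show "\<forall>a'\<in>vecs 24. gt b z c (gt b (\<lambda>i. - z i) c a') = a'" using gt_inv[OF bb zb' zz'] by simp
      show "gt b z c ` vecs 24 \<subseteq> vecs 24" using gtvec assms(10) by auto
      show "gt b (\<lambda>i. - z i) c ` vecs 24 \<subseteq> vecs 24" using gtvec nz by auto
    qed
  next
    fix x y assume "x \<in> vecs 24" "y \<in> vecs 24"
    have e: "x + y = (\<lambda>i. x i + y i)" by (simp add: fun_eq_iff)
    show "gt b z c (x + y) = gt b z c x + gt b z c y" unfolding e gt_add by (simp add: fun_eq_iff)
  next
    fix x y assume "x \<in> vecs 24" "y \<in> vecs 24"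
    show "mukai (gt b z c x) (gt b z c y) = mukai x y" unfolding mukai_MG by (rule gt_isom[OF bb zb zz])
  qed
  have fixb: "gt b z c b = b" using bb bz by (simp add: gt_def)
  have fixv: "gt b z c v = v" using vb vz by (simp add: gt_def)
  have triv: "trivial_on_k3 b (gt b z c)"
    unfolding trivial_on_k3_def
  proof (intro ballI impI)
    fix x assume "x \<in> vecs 24" "mukai x b = 0"
    thus "\<exists>k. gt b z c x - x = zscale k b"
      by (intro exI[of _ "MG x z"]) (simp add: gt_def zscale_def fun_eq_iff mukai_MG)
  qed
  have gam: "\<exists>k. gt b z c \<gamma> - (\<gamma> + z) = zscale k b"
  proof -
    show ?thesis by (intro exI[of _ "MG \<gamma> z + c"]) (simp add: gt_def zscale_def fun_eq_iff gb1 algebra_simps)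
  qed
  have uniq: "\<forall>g. mukai_isometry g \<and> g b = b \<and> g v = v \<and> trivial_on_k3 b g
              \<and> (\<exists>k. g \<gamma> - (\<gamma> + z) = zscale k b)
              \<longrightarrow> (\<forall>x\<in>vecs 24. g x = gt b z c x)"
  proof (intro allI impI ballI)
    fix g x assume H: "mukai_isometry g \<and> g b = b \<and> g v = v \<and> trivial_on_k3 b g
              \<and> (\<exists>k. g \<gamma> - (\<gamma> + z) = zscale k b)" and x: "x \<in> vecs 24"
    from H have add: "\<forall>x\<in>vecs 24. \<forall>y\<in>vecs 24. g (x + y) = g x + g y"
      and iso: "\<forall>x\<in>vecs 24. \<forall>y\<in>vecs 24. MG (g x) (g y) = MG x y"
      unfolding mukai_isometry_def mukai_MG by auto
    from H obtain k where kk: "g \<gamma> - (\<gamma> + z) = zscale k b" by blast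
    have "\<forall>i. g \<gamma> i - (\<gamma> i + z i) = k * b i" using kk by (simp add: fun_eq_iff zscale_def)
    hence ggam: "g \<gamma> = (\<lambda>i. \<gamma> i + z i + k * b i)" by (simp add: fun_eq_iff algebra_simps)
    define a where "a = MG x b"
    define X where "X = (\<lambda>i. x i + a * \<gamma> i)"
    have Xvec: "X \<in> vecs 24" using x assms(7) by (simp add: X_def vecs_def)
    have Xb: "MG X b = 0" unfolding X_def by (simp add: MG_lin gb1 a_def)
    obtain m where mm: "g X - X = zscale m b" using H Xvec Xb unfolding trivial_on_k3_def mukai_MG by blast
    have "\<forall>i. g X i - X i = m * b i" using mm by (simp add: fun_eq_iff zscale_def)
    hence gX: "g X = (\<lambda>i. X i + m * b i)" by (simp add: fun_eq_iff algebra_simps)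
    have Xs: "X = x + zscale a \<gamma>" by (simp add: X_def zscale_def fun_eq_iff)
    have zv: "zscale a \<gamma> \<in> vecs 24" using assms(7) by (simp add: vecs_def zscale_def)
    have gX2: "g X = g x + zscale a (g \<gamma>)"
      unfolding Xs using add x zv add_zscale[OF add assms(7)] by simp
    have "MG (g X) (g \<gamma>) = MG X \<gamma>" using iso Xvec assms(7) by blast
    hence "MG X \<gamma> + MG X z + k * MG X b + m * MG b \<gamma> + m * MG b z + m * k * MG b b = MG X \<gamma>"
      unfolding gX ggam by (simp add: MG_lin algebra_simps)
    hence m: "m = MG X z" using Xb bg1 bz bb by simp
    have "MG (g \<gamma>) (g \<gamma>) = MG \<gamma> \<gamma>" using iso assms(7) by blast
    hence "MG \<gamma> \<gamma> + MG \<gamma> z + k * MG \<gamma> b + MG z \<gamma> + MG z z + k * MG z b + k * MG b \<gamma> + k * MG b z + k * k * MG b b = MG \<gamma> \<gamma>"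
      unfolding ggam by (simp add: MG_lin algebra_simps)
    hence k: "k = MG \<gamma> z + c" using gb1 bg1 zb bz bb zz MG_sym[of z \<gamma>] by simp
    have XZ: "MG X z = MG x z + a * MG \<gamma> z" unfolding X_def by (simp add: MG_lin)
    have "g x = (\<lambda>i. g X i - a * g \<gamma> i)" using gX2 by (simp add: fun_eq_iff zscale_def)
    also have "\<dots> = gt b z c x"
      unfolding gX ggam gt_def m XZ k a_def[symmetric] by (simp add: X_def fun_eq_iff algebra_simps)
    finally show "g x = gt b z c x" .
  qed
  have orient: "orientation_preserving (gt b z c)"
    unfolding orientation_preserving_def
  proof (intro allI impI)
    fix p :: "4 \<Rightarrow> nat \<Rightarrow> real"
    assume H: "(\<forall>a. p a \<in> vecsR 24) \<and>
        (\<forall>c :: real ^ 4. c \<noteq> 0 \<longrightarrow> (\<Sum>a\<in>UNIV. \<Sum>b\<in>UNIV. c $ a * c $ b * mukaiR (p a) (p b)) > 0)"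
    have PD: "\<forall>x::real^4. x \<noteq> 0 \<longrightarrow> (\<Sum>a\<in>UNIV. \<Sum>b'\<in>UNIV. x$a * x$b' * MG (p a) (p b')) > 0"
      using H unfolding mukaiR_MG by blast
    define br where "br = (\<lambda>i. real_of_int (b i))"
    define zr where "zr = (\<lambda>i. real_of_int (z i))"
    define cr where "cr = real_of_int c"
    have brr: "MG br br = 0" unfolding br_def MG_of_int bb by simp
    have zbr: "MG zr br = 0" unfolding br_def zr_def MG_of_int zb by simp
    have zzr: "MG zr zr = 2 * cr" unfolding cr_def zr_def MG_of_int zz by simp
    define R where "R = (\<lambda>t. gt br (\<lambda>i. t * zr i) (t*t*cr))"
    have Risom: "MG (R t x) (R t y) = MG x y" for t x y
      unfolding R_def by (rule gt_isom) (simp_all add: MG_lin brr zbr zzr)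
    have Rent: "MG (R t y) w = MG y w - t * MG y br * MG zr w + (t * MG y zr - t*t*cr * MG y br) * MG br w" for t y w
      unfolding R_def gt_MG_left by (simp add: MG_lin algebra_simps)
    define Q where "Q = (\<lambda>a b'. MG (p a) (p b'))"
    define F1 where "F1 = (\<lambda>s::real. \<chi> a b'. (1 - s) * (if a = b' then 1 else 0) + s * Q a b')"
    define F2 where "F2 = (\<lambda>t::real. \<chi> a b'. MG (R t (p a)) (p b'))"
    have d1: "det (F1 1) > 0"
    proof (rule det_path)
      show "continuous_on {0..1} (\<lambda>t. det (F1 t))" unfolding F1_def by (intro det_cont) (simp add: continuous_intros)
      have "F1 0 = mat 1" by (simp add: F1_def mat_def vec_eq_iff)
      thus "det (F1 0) > 0" by simp
    next
      fix s :: real assume s: "s \<in> {0..1}"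
      show "det (F1 s) \<noteq> 0"
      proof (rule det_nz)
        fix x :: "real^4" assume h: "\<forall>b'. (\<Sum>a\<in>UNIV. F1 s $ a $ b' * x $ a) = 0"
        show "x = 0"
        proof (rule ccontr)
          assume xn: "x \<noteq> 0"
          have "(\<Sum>b'\<in>UNIV. x$b' * (\<Sum>a\<in>UNIV. F1 s $ a $ b' * x $ a)) = 0" using h by simp
          moreover have "(\<Sum>b'\<in>UNIV. x$b' * (\<Sum>a\<in>UNIV. F1 s $ a $ b' * x $ a)) = (1 - s) * (\<Sum>a\<in>UNIV. x$a * x$a) + s * (\<Sum>a\<in>UNIV. \<Sum>b'\<in>UNIV. x$a * x$b' * Q a b')"
          proof -
            have "(\<Sum>b'\<in>UNIV. x$b' * (\<Sum>a\<in>UNIV. F1 s $ a $ b' * x $ a)) = (\<Sum>b'\<in>UNIV. (1 - s) * (x$b' * x$b') + s * (\<Sum>a\<in>UNIV. x$a * x$b' * Q a b'))"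
            proof (rule sum.cong[OF refl])
              fix b' :: 4
              have "(\<Sum>a\<in>UNIV. F1 s $ a $ b' * x $ a) = (\<Sum>a\<in>UNIV. (if a = b' then (1-s) * x$a else 0) + s * (Q a b' * x$a))"
                by (rule sum.cong) (auto simp: F1_def algebra_simps)
              also have "\<dots> = (\<Sum>a\<in>UNIV. (if a = b' then (1-s) * x$a else 0)) + (\<Sum>a\<in>UNIV. s * (Q a b' * x$a))"
                by (rule sum.distrib)
              also have "\<dots> = (1-s) * x$b' + s * (\<Sum>a\<in>UNIV. Q a b' * x$a)"
                by (simp add: sum_distrib_left)
              finally have E: "(\<Sum>a\<in>UNIV. F1 s $ a $ b' * x $ a) = (1-s) * x$b' + s * (\<Sum>a\<in>UNIV. Q a b' * x$a)" .
              show "x$b' * (\<Sum>a\<in>UNIV. F1 s $ a $ b' * x $ a) = (1 - s) * (x$b' * x$b') + s * (\<Sum>a\<in>UNIV. x$a * x$b' * Q a b')"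
                unfolding E by (simp add: sum_distrib_left algebra_simps)
            qed
            also have "\<dots> = (1 - s) * (\<Sum>a\<in>UNIV. x$a * x$a) + s * (\<Sum>b'\<in>UNIV. \<Sum>a\<in>UNIV. x$a * x$b' * Q a b')"
              by (simp add: sum.distrib sum_distrib_left)
            also have "(\<Sum>b'\<in>UNIV. \<Sum>a\<in>UNIV. x$a * x$b' * Q a b') = (\<Sum>a\<in>UNIV. \<Sum>b'\<in>UNIV. x$a * x$b' * Q a b')"
              by (rule sum.swap)
            finally show ?thesis .
          qed
          moreover have "(\<Sum>a\<in>UNIV. x$a * x$a) > 0"
          proof -
            have "x \<bullet> x > 0" using xn by simp
            thus ?thesis by (simp add: inner_vec_def)
          qed
          moreover have "(\<Sum>a\<in>UNIV. \<Sum>b'\<in>UNIV. x$a * x$b' * Q a b') > 0" using PD xn unfolding Q_def by blast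
          moreover have "0 \<le> s" "s \<le> 1" using s by auto
          ultimately show False
            by (smt (verit) mult_nonneg_nonneg mult_pos_pos)
        qed
      qed
    qed
    have ent: "F2 t $ a $ b' = Q a b' - t * MG (p a) br * MG zr (p b') + (t * MG (p a) zr - t*t*cr*MG (p a) br) * MG br (p b')" for t a b'
      unfolding F2_def Q_def Rent by simp
    have d2: "det (F2 1) > 0"
    proof (rule det_path)
      show "continuous_on {0..1} (\<lambda>t. det (F2 t))" by (intro det_cont) (simp add: ent continuous_intros)
      have "F2 0 = F1 1" by (simp add: vec_eq_iff ent F1_def)
      thus "det (F2 0) > 0" using d1 by simp
    next
      fix t :: real assume t: "t \<in> {0..1}"
      show "det (F2 t) \<noteq> 0"
      proof (rule det_nz)
        fix x :: "real^4" assume h: "\<forall>b'. (\<Sum>a\<in>UNIV. F2 t $ a $ b' * x $ a) = 0"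
        show "x = 0"
        proof (rule ccontr)
          assume xn: "x \<noteq> 0"
          define u where "u = (\<lambda>i. \<Sum>a\<in>UNIV. x$a * p a i)"
          have "MG (R t u) (p b') = (\<Sum>a\<in>UNIV. F2 t $ a $ b' * x $ a)" for b'
            unfolding ent Rent u_def MG_sum_left Q_def
            by (simp add: sum_distrib_left sum_distrib_right sum_subtractf sum.distrib algebra_simps)
          hence orth: "\<And>b'. MG (R t u) (p b') = 0" using h by simp
          have "MG (R t u) (R t u) \<le> 0" by (rule inertia[OF PD orth])
          moreover have "MG (R t u) (R t u) = (\<Sum>a\<in>UNIV. \<Sum>b'\<in>UNIV. x$a * x$b' * MG (p a) (p b'))"
            unfolding Risom u_def by (rule MG_quad)
          moreover have "(\<Sum>a\<in>UNIV. \<Sum>b'\<in>UNIV. x$a * x$b' * MG (p a) (p b')) > 0" using PD xn by blast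
          ultimately show False by simp
        qed
      qed
    qed
    have "mukaiR (realext (gt b z c) (p a)) (p b') = MG (R 1 (p a)) (p b')" for a b'
      unfolding mukaiR_MG by (rule gb_cong) (simp add: realext_gt R_def br_def zr_def cr_def)
    hence "(\<chi> a b'. mukaiR (realext (gt b z c) (p a)) (p b')) = F2 1" by (simp add: F2_def vec_eq_iff)
    thus "det (\<chi> a b'. mukaiR (realext (gt b z c) (p a)) (p b')) > 0" using d2 by simp
  qed
  have G': "gtilde b z = gt b z c" using G unfolding b_def .
  show ?thesis unfolding b_def[symmetric] G' using iso fixb fixv triv gam uniq orient by blast
qed

end
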